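(* Let $G$ be a bipartite graph with at most one isolated vertex and no connected component consisting of a single edge, and let $s=s(G)$ be its irregularity strength. Then $G$ contains a spanning subgraph $H$ with $m(H)\le 2s-1$. If moreover $G$ is regular, then $G$ contains a spanning subgraph $H$ with $m(H)\le 2s-3$.
   Context: All graphs are finite and simple. For a graph $G$ and integer $k\ge0$, $m(G,k)$ is the number of vertices of degree exactly $k$ in $G$ and $m(G)=\max_k m(G,k)$. For a graph $G=(V,E)$ with at most one isolated vertex and no isolated edges (components isomorphic to $K_2$), the irregularity strength $s(G)$ is the smallest positive integer $s$ such that there is a function $w:E\to\{1,2,\dots,s\}$ for which the sums $\sum_{e\ni v}w(e)$, $v\in V$, are pairwise distinct. *)

theory Defs
  imports Main
begin

definition simple_graph :: "'a set \<Rightarrow> 'a set set \<Rightarrow> bool" where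
  "simple_graph V E \<longleftrightarrow> finite V \<and>
     (\<forall>e\<in>E. \<exists>u v. u \<noteq> v \<and> u \<in> V \<and> v \<in> V \<and> e = {u, v})"

definition deg :: "'a set set \<Rightarrow> 'a \<Rightarrow> nat" where
  "deg E v = card {e \<in> E. v \<in> e}"

definition mult_deg :: "'a set \<Rightarrow> 'a set set \<Rightarrow> nat \<Rightarrow> nat" where
  "mult_deg V E k = card {v \<in> V. deg E v = k}"

definition max_mult :: "'a set \<Rightarrow> 'a set set \<Rightarrow> nat" where
  "max_mult V E = Max (range (mult_deg V E))"

definition bipartite :: "'a set \<Rightarrow> 'a set set \<Rightarrow> bool" where
  "bipartite V E \<longleftrightarrow> (\<exists>A B. A \<inter> B = {} \<and> A \<union> B = V \<and>
      (\<forall>e\<in>E. \<exists>a b. a \<in> A \<and> b \<in> B \<and> e = {a, b}))"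

definition regular :: "'a set \<Rightarrow> 'a set set \<Rightarrow> bool" where
  "regular V E \<longleftrightarrow> (\<exists>k. \<forall>v\<in>V. deg E v = k)"

definition at_most_one_isolated :: "'a set \<Rightarrow> 'a set set \<Rightarrow> bool" where
  "at_most_one_isolated V E \<longleftrightarrow> card {v \<in> V. deg E v = 0} \<le> 1"

text \<open>No component isomorphic to K2: no edge both of whose endpoints have degree 1.\<close>
definition no_isolated_edge :: "'a set \<Rightarrow> 'a set set \<Rightarrow> bool" where
  "no_isolated_edge V E \<longleftrightarrow> \<not> (\<exists>u v. {u, v} \<in> E \<and> u \<noteq> v \<and> deg E u = 1 \<and> deg E v = 1)"

definition irregular_weighting :: "'a set \<Rightarrow> 'a set set \<Rightarrow> nat \<Rightarrow> bool" where
  "irregular_weighting V E s \<longleftrightarrow> (\<exists>w :: 'a set \<Rightarrow> nat.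
      (\<forall>e\<in>E. w e \<in> {1..s}) \<and> inj_on (\<lambda>v. \<Sum>e\<in>{e \<in> E. v \<in> e}. w e) V)"

definition irregularity_strength :: "'a set \<Rightarrow> 'a set set \<Rightarrow> nat" where
  "irregularity_strength V E = (LEAST s. s \<ge> 1 \<and> irregular_weighting V E s)"

end

theory Submission
  imports Defs "HOL-Library.Transitive_Closure_Table"
begin

definition tau :: "int \<Rightarrow> ('a set \<Rightarrow> int) \<Rightarrow> 'a set set \<Rightarrow> 'a set \<Rightarrow> int" where
  "tau t c H e = (if e \<in> H then t - c e else - c e)"

definition dl :: "int \<Rightarrow> ('a set \<Rightarrow> int) \<Rightarrow> 'a set set \<Rightarrow> 'a set set \<Rightarrow> 'a \<Rightarrow> int" where
  "dl t c E H v = (\<Sum>e\<in>{e\<in>E. v\<in>e}. tau t c H e)"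

definition tog :: "'a set set \<Rightarrow> 'a set \<Rightarrow> 'a set set" where
  "tog H f = (if f \<in> H then H - {f} else insert f H)"

lemma dl_tog:
  assumes "finite E" "f \<in> E"
  shows "dl t c E (tog H f) v = dl t c E H v + (if v \<in> f then (if f \<in> H then -t else t) else 0)"
proof (cases "v \<in> f")
  case False
  have "dl t c E (tog H f) v = dl t c E H v"
    unfolding dl_def by (rule sum.cong) (use False in \<open>auto simp: tau_def tog_def\<close>)
  then show ?thesis using False by simp
next
  case True
  let ?S = "{e\<in>E. v\<in>e}"
  have fin: "finite ?S" using assms by simp
  have fS: "f \<in> ?S" using True assms by simp
  have eq: "(\<Sum>e\<in>?S - {f}. tau t c (tog H f) e) = (\<Sum>e\<in>?S - {f}. tau t c H e)"
    by (rule sum.cong) (auto simp: tau_def tog_def)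
  have "dl t c E (tog H f) v = tau t c (tog H f) f + (\<Sum>e\<in>?S - {f}. tau t c (tog H f) e)"
    unfolding dl_def using sum.remove[OF fin fS] by blast
  moreover have "dl t c E H v = tau t c H f + (\<Sum>e\<in>?S - {f}. tau t c H e)"
    unfolding dl_def using sum.remove[OF fin fS] by blast
  ultimately show ?thesis using True eq by (auto simp: tau_def tog_def)
qed

definition stp :: "'a set set \<Rightarrow> 'a set set \<Rightarrow> 'a set \<Rightarrow> 'a set \<Rightarrow> 'a \<Rightarrow> 'a \<Rightarrow> bool" where
  "stp E H P Q x y \<longleftrightarrow> {x,y} \<in> E \<and> ((x \<in> P \<and> {x,y} \<in> H) \<or> (x \<in> Q \<and> {x,y} \<notin> H))"

fun flipseq :: "'a set set \<Rightarrow> 'a \<Rightarrow> 'a list \<Rightarrow> 'a set set" where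
  "flipseq H x [] = H"
| "flipseq H x (y#ys) = flipseq (tog H {x,y}) y ys"

lemma path_tog:
  assumes "rtrancl_path (stp E H P Q) y ys z" "x \<notin> set (y#ys)"
  shows "rtrancl_path (stp E (tog H {x,w}) P Q) y ys z"
  using assms
proof (induction rule: rtrancl_path.induct)
  case (base a) then show ?case by (simp add: rtrancl_path.base)
next
  case (step a b bs z)
  have ne: "{a,b} \<noteq> {x,w}" using step.prems by auto
  have "stp E (tog H {x,w}) P Q a b" using step.hyps(1) ne by (auto simp: stp_def tog_def)
  then show ?case using step by (auto intro: rtrancl_path.step)
qed

definition sg :: "int \<Rightarrow> 'a set \<Rightarrow> 'a \<Rightarrow> int" where
  "sg t P y = (if y \<in> P then -t else t)"

lemma flip_path:
  assumes "rtrancl_path (stp E H P Q) x xs z" "distinct (x#xs)" "xs \<noteq> []"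
    "x \<in> P \<union> Q" "P \<inter> Q = {}" "\<forall>e\<in>E. \<exists>a b. a\<in>P \<and> b\<in>Q \<and> e = {a,b}" "finite E"
  shows "\<forall>v. dl t c E (flipseq H x xs) v = dl t c E H v + (if v = x then sg t P x else 0)
            - (if v = z then sg t P z else 0)"
  using assms(1-4)
proof (induction xs arbitrary: x H)
  case Nil then show ?case by simp
next
  case (Cons y ys)
  from Cons.prems(1) have s: "stp E H P Q x y" and r: "rtrancl_path (stp E H P Q) y ys z"
    by (auto elim: rtrancl_path.cases)
  have xy: "x \<noteq> y" using Cons.prems(2) by auto
  have eE: "{x,y} \<in> E" using s by (simp add: stp_def)
  have side: "(x \<in> P \<and> y \<in> Q) \<or> (x \<in> Q \<and> y \<in> P)"
  proof -
    obtain a b where "a\<in>P" "b\<in>Q" "{x,y} = {a,b}" using assms(6) eE by blast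
    then show ?thesis by (auto simp: doubleton_eq_iff)
  qed
  have sgx: "(if {x,y} \<in> H then -t else t) = sg t P x"
    using s side assms(5) by (auto simp: stp_def sg_def)
  have sgy: "sg t P y = - sg t P x" using side assms(5) by (auto simp: sg_def)
  let ?H1 = "tog H {x,y}"
  have d1: "\<forall>v. dl t c E ?H1 v = dl t c E H v + (if v \<in> {x,y} then sg t P x else 0)"
  proof
    fix v show "dl t c E ?H1 v = dl t c E H v + (if v \<in> {x,y} then sg t P x else 0)"
      using dl_tog[OF assms(7) eE, of t c H v] sgx by simp
  qed
  show ?case
  proof (cases "ys = []")
    case True
    then have "z = y" using r by (auto elim: rtrancl_path.cases)
    then show ?thesis using True d1 sgy xy by auto
  next
    case False
    have r1: "rtrancl_path (stp E ?H1 P Q) y ys z"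
      by (rule path_tog[OF r]) (use Cons.prems(2) in auto)
    have IH: "\<forall>v. dl t c E (flipseq ?H1 y ys) v = dl t c E ?H1 v + (if v = y then sg t P y else 0)
            - (if v = z then sg t P z else 0)"
      by (rule Cons.IH[OF r1]) (use Cons.prems(2) False side in auto)
    have xz: "x \<noteq> z"
    proof -
      have "z \<in> set ys" using r False
        by (metis list.set_intros(1) rtrancl_path.cases rtrancl_path_last last_in_set)
      then show ?thesis using Cons.prems(2) by auto
    qed
    show ?thesis using IH d1 sgy xy xz by auto
  qed
qed

lemma flipseq_sub:
  assumes "rtrancl_path (stp E H P Q) x xs z" "distinct (x#xs)" "H \<subseteq> E"
  shows "flipseq H x xs \<subseteq> E"
  using assms
proof (induction xs arbitrary: x H)
  case Nil then show ?case by simp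
next
  case (Cons y ys)
  from Cons.prems(1) have s: "stp E H P Q x y" and r: "rtrancl_path (stp E H P Q) y ys z"
    by (auto elim: rtrancl_path.cases)
  have eE: "{x,y} \<in> E" using s by (simp add: stp_def)
  have r1: "rtrancl_path (stp E (tog H {x,y}) P Q) y ys z"
    by (rule path_tog[OF r]) (use Cons.prems(2) in auto)
  have "tog H {x,y} \<subseteq> E" using eE Cons.prems(3) by (auto simp: tog_def)
  then show ?case using Cons.IH[OF r1] Cons.prems(2) by simp
qed

definition Phi :: "int \<Rightarrow> ('a set \<Rightarrow> int) \<Rightarrow> 'a set set \<Rightarrow> 'a set \<Rightarrow> 'a set set \<Rightarrow> int" where
  "Phi t c E V H = (\<Sum>v\<in>V. (dl t c E H v)^2)"

lemma pos_bound:
  assumes finV: "finite V" and EV: "\<forall>e\<in>E. e \<subseteq> V" and finE: "finite E"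
    and PQ: "P \<inter> Q = {}" "P \<union> Q = V" and sides: "\<forall>e\<in>E. \<exists>a b. a\<in>P \<and> b\<in>Q \<and> e = {a,b}"
    and cb: "\<forall>e\<in>E. 0 \<le> c e \<and> c e \<le> t" and tpos: "t > 0" and HE: "H \<subseteq> E"
    and mn: "\<forall>K\<subseteq>E. Phi t c E V H \<le> Phi t c E V K" and uV: "u \<in> P"
  shows "dl t c E H u < t"
proof (rule ccontr)
  assume "\<not> dl t c E H u < t"
  then have du: "dl t c E H u \<ge> t" by simp
  define d where "d = dl t c E H"
  define R where "R = {y. (stp E H P Q)\<^sup>*\<^sup>* u y}"
  have uR: "u \<in> R" unfolding R_def by simp
  have RV: "R \<subseteq> V"
  proof
    fix y assume "y \<in> R"
    then have "(stp E H P Q)\<^sup>*\<^sup>* u y" by (simp add: R_def)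
    then show "y \<in> V"
    proof (induction rule: rtranclp_induct)
      case base then show ?case using uV PQ by auto
    next
      case (step y z) then show ?case using EV by (auto simp: stp_def)
    qed
  qed
  have finR: "finite R" using RV finV finite_subset by blast
  have ex: "\<exists>y\<in>R. (y \<in> Q \<and> d y > 0) \<or> (y \<in> P \<and> d y < 0)"
  proof (rule ccontr)
    assume no: "\<not> ?thesis"
    define g where "g y = (if y \<in> P then 1 else -1::int)" for y
    define S where "S = (\<Sum>y\<in>R. g y * d y)"
    have nn: "\<forall>y\<in>R. g y * d y \<ge> 0"
    proof
      fix y assume yR: "y \<in> R"
      then have "y \<in> P \<or> y \<in> Q" using RV PQ by auto
      then show "g y * d y \<ge> 0" using no yR PQ(1) by (auto simp: g_def)
    qed
    have "g u * d u \<le> S" unfolding S_def by (rule member_le_sum[OF uR]) (use nn finR in auto)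
    then have Sge: "S \<ge> t" using du uV by (simp add: g_def d_def)
    have "S = (\<Sum>y\<in>R. \<Sum>e\<in>E. (if y \<in> e then g y * tau t c H e else 0))"
      unfolding S_def d_def dl_def
    proof (rule sum.cong)
      fix y assume "y \<in> R"
      have "g y * (\<Sum>e\<in>{e \<in> E. y \<in> e}. tau t c H e) = (\<Sum>e\<in>{e \<in> E. y \<in> e}. g y * tau t c H e)"
        by (simp add: sum_distrib_left)
      also have "\<dots> = (\<Sum>e\<in>E. (if y \<in> e then g y * tau t c H e else 0))"
        by (rule sum.inter_filter[OF finE])
      finally show "g y * (\<Sum>e\<in>{e \<in> E. y \<in> e}. tau t c H e) = (\<Sum>e\<in>E. (if y \<in> e then g y * tau t c H e else 0))" .
    qed simp
    also have "\<dots> = (\<Sum>e\<in>E. \<Sum>y\<in>R. (if y \<in> e then g y * tau t c H e else 0))"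
      by (rule sum.swap)
    also have "\<dots> \<le> 0"
    proof (rule sum_nonpos)
      fix e assume eE: "e \<in> E"
      obtain a b where ab: "a\<in>P" "b\<in>Q" "e = {a,b}" using sides eE by blast
      have anb: "a \<noteq> b" using ab PQ(1) by auto
      have "(\<Sum>y\<in>R. (if y \<in> e then g y * tau t c H e else 0)) = (\<Sum>y\<in>R \<inter> {a,b}. g y * tau t c H e)"
        using ab(3) finR by (simp add: sum.inter_filter[symmetric] Int_def conj_commute)
      also have "\<dots> \<le> 0"
      proof (cases "a \<in> R"; cases "b \<in> R")
        assume "a \<in> R" "b \<in> R"
        then have "R \<inter> {a,b} = {a,b}" by auto
        then show ?thesis using anb ab PQ(1) by (auto simp: g_def)
      next
        assume aR: "a \<in> R" and bR: "b \<notin> R"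
        have "e \<notin> H"
        proof
          assume "e \<in> H"
          then have "stp E H P Q a b" using ab eE by (auto simp: stp_def)
          then have "b \<in> R" using aR by (auto simp: R_def intro: rtranclp.rtrancl_into_rtrancl)
          then show False using bR by simp
        qed
        then have "tau t c H e \<le> 0" using cb eE by (auto simp: tau_def)
        moreover have "R \<inter> {a,b} = {a}" using aR bR by auto
        ultimately show ?thesis using ab by (simp add: g_def)
      next
        assume aR: "a \<notin> R" and bR: "b \<in> R"
        have "e \<in> H"
        proof (rule ccontr)
          assume "e \<notin> H"
          then have "stp E H P Q b a" using ab eE by (auto simp: stp_def insert_commute)
          then have "a \<in> R" using bR by (auto simp: R_def intro: rtranclp.rtrancl_into_rtrancl)
          then show False using aR by simp
        qed
        then have "tau t c H e \<ge> 0" using cb eE by (auto simp: tau_def)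
        moreover have "R \<inter> {a,b} = {b}" using aR bR by auto
        ultimately show ?thesis using ab PQ(1) by (auto simp: g_def)
      next
        assume "a \<notin> R" "b \<notin> R"
        then have "R \<inter> {a,b} = {}" by auto
        then show ?thesis by simp
      qed
      finally show "(\<Sum>y\<in>R. (if y \<in> e then g y * tau t c H e else 0)) \<le> 0" .
    qed
    finally show False using Sge tpos by simp
  qed
  then obtain y where yR: "y \<in> R" and yc: "(y \<in> Q \<and> d y > 0) \<or> (y \<in> P \<and> d y < 0)" by blast
  have yu: "y \<noteq> u" using yc du tpos uV PQ(1) by (auto simp: d_def)
  obtain xs0 where "rtrancl_path (stp E H P Q) u xs0 y"
    using yR by (auto simp: R_def rtranclp_eq_rtrancl_path)
  then obtain xs where p: "rtrancl_path (stp E H P Q) u xs y" and dist: "distinct (u#xs)"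
    using rtrancl_path_distinct by metis
  have xsne: "xs \<noteq> []" using p yu by (auto elim: rtrancl_path.cases)
  define H2 where "H2 = flipseq H u xs"
  have H2E: "H2 \<subseteq> E" unfolding H2_def by (rule flipseq_sub[OF p dist HE])
  have fl: "\<forall>v. dl t c E H2 v = d v + (if v = u then sg t P u else 0) - (if v = y then sg t P y else 0)"
    unfolding H2_def d_def by (rule flip_path[OF p dist xsne]) (use uV PQ sides finE in auto)
  define A where "A = (d u + sg t P u)^2 - (d u)^2"
  define B where "B = (d y - sg t P y)^2 - (d y)^2"
  have yV: "y \<in> V" using yR RV by auto
  have uV': "u \<in> V" using uV PQ by auto
  have "Phi t c E V H2 - Phi t c E V H = (\<Sum>v\<in>V. (dl t c E H2 v)^2 - (d v)^2)"
    unfolding Phi_def d_def by (simp add: sum_subtractf)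
  also have "\<dots> = (\<Sum>v\<in>V. (if v = u then A else 0) + (if v = y then B else 0))"
    by (rule sum.cong) (use fl yu in \<open>auto simp: A_def B_def\<close>)
  also have "\<dots> = A + B" using finV yV uV' by (simp add: sum.distrib)
  also have "\<dots> < 0"
  proof -
    have sgu: "sg t P u = -t" using uV by (simp add: sg_def)
    have A': "A = t*t - 2*t*d u" using sgu by (simp add: A_def power2_eq_square algebra_simps)
    have "2*t*d u \<ge> 2*t*t" using du tpos by (simp add: d_def)
    then have A2: "A \<le> - t*t" using A' by simp
    have "B = t*t - 2*t*\<bar>d y\<bar>"
      using yc PQ(1) by (auto simp: B_def sg_def power2_eq_square algebra_simps)
    moreover have "\<bar>d y\<bar> \<ge> 1" using yc by auto
    then have "2*t*\<bar>d y\<bar> \<ge> 2*t" using tpos by simp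
    ultimately have "B \<le> t*t - 2*t" by simp
    then show ?thesis using A2 tpos by simp
  qed
  finally have "Phi t c E V H2 < Phi t c E V H" by simp
  moreover have "Phi t c E V H \<le> Phi t c E V H2" using mn H2E by blast
  ultimately show False by simp
qed

lemma dl_compl:
  shows "dl t (\<lambda>e. t - c e) E (E - K) v = - dl t c E K v"
  unfolding dl_def sum_negf[symmetric] by (rule sum.cong) (auto simp: tau_def)

lemma Phi_compl: "Phi t (\<lambda>e. t - c e) E V (E - K) = Phi t c E V K"
  unfolding Phi_def by (simp add: dl_compl)

lemma rounding:
  assumes finV: "finite V" and EV: "\<forall>e\<in>E. e \<subseteq> V" and finE: "finite E"
    and AB: "A \<inter> B = {}" "A \<union> B = V" and sides: "\<forall>e\<in>E. \<exists>a b. a\<in>A \<and> b\<in>B \<and> e = {a,b}"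
    and cb: "\<forall>e\<in>E. 0 \<le> c e \<and> c e \<le> t" and tpos: "t > 0"
  shows "\<exists>H\<subseteq>E. \<forall>v\<in>V. \<bar>dl t c E H v\<bar> < t"
proof -
  define M where "M = Min (Phi t c E V ` Pow E)"
  have fin: "finite (Phi t c E V ` Pow E)" using finE by simp
  have "M \<in> Phi t c E V ` Pow E" unfolding M_def by (rule Min_in[OF fin]) auto
  then obtain H where HE: "H \<subseteq> E" and HM: "Phi t c E V H = M" by auto
  have mn: "\<forall>K\<subseteq>E. Phi t c E V H \<le> Phi t c E V K"
    using HM fin by (auto simp: M_def)
  have sides': "\<forall>e\<in>E. \<exists>a b. a\<in>B \<and> b\<in>A \<and> e = {a,b}"
    using sides by (metis insert_commute)
  have AB': "B \<inter> A = {}" "B \<union> A = V" using AB by auto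
  have up: "dl t c E H v < t" if "v \<in> V"
    and mn: "\<forall>K\<subseteq>E. Phi t c E V H \<le> Phi t c E V K"
    and cb: "\<forall>e\<in>E. 0 \<le> c e \<and> c e \<le> t" and HE: "H \<subseteq> E" for v c and H :: "'a set set"
  proof (cases "v \<in> A")
    case True
    show ?thesis by (rule pos_bound[OF finV EV finE AB sides cb tpos HE mn True])
  next
    case False
    then have "v \<in> B" using that AB by auto
    then show ?thesis by (rule pos_bound[OF finV EV finE AB' sides' cb tpos HE mn])
  qed
  have mn': "\<forall>K\<subseteq>E. Phi t (\<lambda>e. t - c e) E V (E - H) \<le> Phi t (\<lambda>e. t - c e) E V K"
  proof (intro allI impI)
    fix K assume "K \<subseteq> E"
    then have "E - (E - K) = K" by auto
    then have "Phi t (\<lambda>e. t - c e) E V K = Phi t c E V (E - K)"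
      using Phi_compl[of t c E V "E - K"] by simp
    moreover have "Phi t c E V H \<le> Phi t c E V (E - K)" using mn by auto
    ultimately show "Phi t (\<lambda>e. t - c e) E V (E - H) \<le> Phi t (\<lambda>e. t - c e) E V K"
      by (simp add: Phi_compl)
  qed
  have cb': "\<forall>e\<in>E. 0 \<le> t - c e \<and> t - c e \<le> t" using cb by auto
  show ?thesis
  proof (intro exI[of _ H] conjI HE ballI)
    fix v assume vV: "v \<in> V"
    have "dl t c E H v < t" by (rule up[OF vV mn cb HE])
    moreover have "dl t (\<lambda>e. t - c e) E (E - H) v < t" by (rule up[OF vV mn' cb']) auto
    then have "- dl t c E H v < t" by (simp add: dl_compl)
    ultimately show "\<bar>dl t c E H v\<bar> < t" by simp
  qed
qed

lemma dl_deg: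
  assumes "H \<subseteq> E" "finite E"
  shows "dl t c E H v = t * int (deg H v) - (\<Sum>e\<in>{e\<in>E. v\<in>e}. c e)"
proof -
  have fin: "finite {e\<in>E. v\<in>e}" using assms by simp
  have "dl t c E H v = (\<Sum>e\<in>{e\<in>E. v\<in>e}. (if e \<in> H then t else 0)) - (\<Sum>e\<in>{e\<in>E. v\<in>e}. c e)"
    unfolding dl_def sum_subtractf[symmetric] by (rule sum.cong) (auto simp: tau_def)
  also have "(\<Sum>e\<in>{e\<in>E. v\<in>e}. (if e \<in> H then t else 0)) = t * int (card {e\<in>{e\<in>E. v\<in>e}. e \<in> H})"
    using sum.inter_filter[OF fin, of "\<lambda>_. t" "\<lambda>e. e \<in> H"] by (auto simp: mult.commute)
  also have "{e\<in>{e\<in>E. v\<in>e}. e \<in> H} = {e\<in>H. v\<in>e}" using assms by auto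
  finally show ?thesis by (simp add: deg_def)
qed

lemma mult_bound:
  assumes finV: "finite V" and finE: "finite E" and HE: "H \<subseteq> E"
    and bd: "\<forall>v\<in>V. \<bar>dl t c E H v\<bar> < t"
    and inj: "inj_on (\<lambda>v. \<Sum>e\<in>{e\<in>E. v\<in>e}. c e) V" and tpos: "t > 0"
  shows "int (max_mult V H) \<le> 2*t - 1"
proof -
  let ?s = "\<lambda>v. \<Sum>e\<in>{e\<in>E. v\<in>e}. c e"
  have each: "int (mult_deg V H k) \<le> 2*t - 1" for k
  proof -
    let ?X = "{v\<in>V. deg H v = k}"
    have "?s ` ?X \<subseteq> {t * int k - t + 1 .. t * int k + t - 1}"
    proof
      fix x assume "x \<in> ?s ` ?X"
      then obtain v where v: "v \<in> V" "deg H v = k" "x = ?s v" by auto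
      have "\<bar>t * int k - x\<bar> < t" using bd v dl_deg[OF HE finE, of t c v] by auto
      then show "x \<in> {t * int k - t + 1 .. t * int k + t - 1}" by auto
    qed
    moreover have "inj_on ?s ?X" using inj by (rule inj_on_subset) auto
    ultimately have "card ?X \<le> card {t * int k - t + 1 .. t * int k + t - 1}"
      by (intro card_inj_on_le) auto
    then show ?thesis using tpos by (simp add: mult_deg_def le_nat_iff)
  qed
  have fr: "finite (range (mult_deg V H))"
  proof (rule finite_subset)
    show "range (mult_deg V H) \<subseteq> {..card V}"
      using finV by (auto simp: mult_deg_def intro: card_mono)
  qed simp
  have "max_mult V H \<in> range (mult_deg V H)" unfolding max_mult_def by (rule Max_in[OF fr]) auto
  then show ?thesis using each by auto
qed

lemma sum_pow2_lt:
  assumes "S \<subseteq> {..<n}"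
  shows "(\<Sum>i\<in>S. (2::nat)^i) < 2^n"
proof -
  have "(\<Sum>i\<in>S. (2::nat)^i) \<le> (\<Sum>i\<in>{q. q < n}. 2^i)"
    by (rule sum_mono2) (use assms in auto)
  also have "\<dots> = 2^n - 1" by (simp add: mask_eq_sum_exp_nat)
  also have "\<dots> < 2^n" by simp
  finally show ?thesis .
qed

lemma sum_remove_if:
  assumes "finite S"
  shows "(\<Sum>i\<in>S. (2::nat)^i) = (if n \<in> S then 2^n else 0) + (\<Sum>i\<in>S - {n}. 2^i)"
proof (cases "n \<in> S")
  case True then show ?thesis using sum.remove[OF assms True, of "\<lambda>i. (2::nat)^i"] by simp
next
  case False then have "S - {n} = S" by simp
  then show ?thesis using False by simp
qed

lemma bin_inj:
  "S \<subseteq> {..<n} \<Longrightarrow> T \<subseteq> {..<n} \<Longrightarrow> (\<Sum>i\<in>S. (2::nat)^i) = (\<Sum>i\<in>T. 2^i) \<Longrightarrow> S = T"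
proof (induction n arbitrary: S T)
  case 0 then show ?case by auto
next
  case (Suc n)
  have fS: "finite S" "finite T" using Suc.prems finite_subset by auto
  have S': "S - {n} \<subseteq> {..<n}" "T - {n} \<subseteq> {..<n}" using Suc.prems by auto
  define a where "a = (\<Sum>i\<in>S - {n}. (2::nat)^i)"
  define b where "b = (\<Sum>i\<in>T - {n}. (2::nat)^i)"
  have sS: "(\<Sum>i\<in>S. (2::nat)^i) = (if n \<in> S then 2^n else 0) + a"
    unfolding a_def by (rule sum_remove_if[OF fS(1)])
  have sT: "(\<Sum>i\<in>T. (2::nat)^i) = (if n \<in> T then 2^n else 0) + b"
    unfolding b_def by (rule sum_remove_if[OF fS(2)])
  have lS: "a < 2^n" unfolding a_def by (rule sum_pow2_lt[OF S'(1)])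
  have lT: "b < 2^n" unfolding b_def by (rule sum_pow2_lt[OF S'(2)])
  have eq: "(if n \<in> S then 2^n else 0) + a = (if n \<in> T then (2::nat)^n else 0) + b"
    using Suc.prems(3) sS sT by simp
  have nn: "(n \<in> S) = (n \<in> T)"
  proof (rule ccontr)
    assume "(n \<in> S) \<noteq> (n \<in> T)"
    then consider "n \<in> S" "n \<notin> T" | "n \<notin> S" "n \<in> T" by blast
    then show False
    proof cases
      case 1 then have "2^n + a = b" using eq by simp
      then show False using lT by linarith
    next
      case 2 then have "a = 2^n + b" using eq by simp
      then show False using lS by linarith
    qed
  qed
  have "a = b" using eq nn by (cases "n \<in> S") simp_all
  then have "S - {n} = T - {n}" unfolding a_def b_def by (rule Suc.IH[OF S'])
  then show ?case using nn by blast
qed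

lemma graph_sep:
  assumes sg: "simple_graph V E" and iso: "at_most_one_isolated V E" and ie: "no_isolated_edge V E"
    and uv: "u \<in> V" "v \<in> V" and eq: "{e\<in>E. u\<in>e} = {e\<in>E. v\<in>e}"
  shows "u = v"
proof (rule ccontr)
  assume ne: "u \<noteq> v"
  have finV: "finite V" using sg by (simp add: simple_graph_def)
  show False
  proof (cases "{e\<in>E. u\<in>e} = {}")
    case True
    moreover have "{e\<in>E. v\<in>e} = {}" using True eq by simp
    ultimately have "deg E u = 0" "deg E v = 0" unfolding deg_def by (metis card.empty)+
    then have "{u,v} \<subseteq> {w\<in>V. deg E w = 0}" using uv by auto
    then have "card {u,v} \<le> card {w\<in>V. deg E w = 0}" by (rule card_mono[rotated]) (use finV in simp)
    then show False using iso ne by (simp add: at_most_one_isolated_def)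
  next
    case False
    have all: "e = {u,v}" if "e \<in> {e\<in>E. u\<in>e}" for e
    proof -
      have "v \<in> e" "u \<in> e" "e \<in> E" using that eq by auto
      moreover obtain a b where "a \<noteq> b" "e = {a,b}" using sg \<open>e \<in> E\<close> by (auto simp: simple_graph_def)
      ultimately show ?thesis using ne by auto
    qed
    then have "{e\<in>E. u\<in>e} = {{u,v}}" using False by blast
    then have "deg E u = 1" "deg E v = 1" "{u,v} \<in> E" using eq by (auto simp: deg_def)
    then show False using ie ne by (auto simp: no_isolated_edge_def)
  qed
qed

lemma exists_weighting:
  assumes sg: "simple_graph V E" and iso: "at_most_one_isolated V E" and ie: "no_isolated_edge V E"
  shows "irregular_weighting V E (2 ^ card E)"
proof -
  have EP: "E \<subseteq> Pow V" using sg by (auto simp: simple_graph_def)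
  have finE: "finite E" using sg EP finite_subset by (auto simp: simple_graph_def)
  obtain f where bf: "bij_betw f E {0..<card E}" using ex_bij_betw_finite_nat[OF finE] by blast
  have injf: "inj_on f E" and fE: "f ` E = {0..<card E}" using bf by (auto simp: bij_betw_def)
  define w where "w e = (2::nat) ^ f e" for e
  have wr: "\<forall>e\<in>E. w e \<in> {1..2 ^ card E}"
  proof
    fix e assume "e \<in> E"
    then have "f e < card E" using fE by auto
    then have "w e \<le> 2 ^ card E" unfolding w_def by (simp add: power_increasing)
    then show "w e \<in> {1..2 ^ card E}" by (simp add: w_def)
  qed
  have sw: "(\<Sum>e\<in>{e\<in>E. v\<in>e}. w e) = (\<Sum>i\<in>f ` {e\<in>E. v\<in>e}. 2^i)" for v
    by (subst sum.reindex) (use injf in \<open>auto simp: w_def intro: inj_on_subset\<close>)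
  have "inj_on (\<lambda>v. \<Sum>e\<in>{e\<in>E. v\<in>e}. w e) V"
  proof (rule inj_onI)
    fix u v assume uv: "u \<in> V" "v \<in> V" and h: "(\<Sum>e\<in>{e\<in>E. u\<in>e}. w e) = (\<Sum>e\<in>{e\<in>E. v\<in>e}. w e)"
    have s1: "f ` {e\<in>E. u\<in>e} \<subseteq> {..<card E}" "f ` {e\<in>E. v\<in>e} \<subseteq> {..<card E}"
      using fE by auto
    have s2: "(\<Sum>i\<in>f ` {e\<in>E. u\<in>e}. (2::nat)^i) = (\<Sum>i\<in>f ` {e\<in>E. v\<in>e}. 2^i)"
      using h by (simp only: sw)
    have "f ` {e\<in>E. u\<in>e} = f ` {e\<in>E. v\<in>e}"
      by (rule bin_inj[OF s1 s2])
    then have "{e\<in>E. u\<in>e} = {e\<in>E. v\<in>e}"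
      by (subst (asm) inj_on_image_eq_iff[OF injf]) auto
    then show "u = v" by (rule graph_sep[OF sg iso ie uv])
  qed
  then show ?thesis using wr unfolding irregular_weighting_def by (intro exI[of _ w] conjI)
qed

theorem theorem1p7:
  fixes V :: "'a set" and E :: "'a set set"
  assumes "simple_graph V E"
    and "bipartite V E"
    and "at_most_one_isolated V E"
    and "no_isolated_edge V E"
  shows "(\<exists>H \<subseteq> E. int (max_mult V H) \<le> 2 * int (irregularity_strength V E) - 1)
       \<and> (regular V E \<and> E \<noteq> {} \<longrightarrow>
            (\<exists>H \<subseteq> E. int (max_mult V H) \<le> 2 * int (irregularity_strength V E) - 3))"
proof -
  note sg = assms(1)
  have finV: "finite V" using sg by (simp add: simple_graph_def)
  have EV: "\<forall>e\<in>E. e \<subseteq> V" using sg by (auto simp: simple_graph_def)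
  have finE: "finite E"
  proof (rule finite_subset)
    show "E \<subseteq> Pow V" using EV by auto
  qed (use finV in simp)
  obtain A B where AB: "A \<inter> B = {}" "A \<union> B = V" and sides: "\<forall>e\<in>E. \<exists>a b. a\<in>A \<and> b\<in>B \<and> e = {a,b}"
    using assms(2) unfolding bipartite_def by blast
  define s where "s = irregularity_strength V E"
  have ex: "\<exists>s. s \<ge> 1 \<and> irregular_weighting V E s"
    using exists_weighting[OF sg assms(3,4)] by (intro exI[of _ "2 ^ card E"]) simp
  have sP: "s \<ge> 1 \<and> irregular_weighting V E s"
    unfolding s_def irregularity_strength_def by (rule LeastI_ex[OF ex])
  then obtain w :: "'a set \<Rightarrow> nat" where wr: "\<forall>e\<in>E. w e \<in> {1..s}"
    and winj: "inj_on (\<lambda>v. \<Sum>e\<in>{e \<in> E. v \<in> e}. w e) V"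
    unfolding irregular_weighting_def by blast
  have s1: "s \<ge> 1" using sP by simp
  have sumint: "(\<Sum>e\<in>{e \<in> E. v \<in> e}. int (w e)) = int (\<Sum>e\<in>{e \<in> E. v \<in> e}. w e)" for v
    by simp
  have part1: "\<exists>H \<subseteq> E. int (max_mult V H) \<le> 2 * int s - 1"
  proof -
    have cb: "\<forall>e\<in>E. 0 \<le> int (w e) \<and> int (w e) \<le> int s" using wr by auto
    obtain H where HE: "H \<subseteq> E" and bd: "\<forall>v\<in>V. \<bar>dl (int s) (\<lambda>e. int (w e)) E H v\<bar> < int s"
      using rounding[OF finV EV finE AB sides cb] s1 by auto
    have inj: "inj_on (\<lambda>v. \<Sum>e\<in>{e \<in> E. v \<in> e}. int (w e)) V"
    proof (rule inj_onI)
      fix x y assume xy: "x \<in> V" "y \<in> V"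
        and h: "(\<Sum>e\<in>{e \<in> E. x \<in> e}. int (w e)) = (\<Sum>e\<in>{e \<in> E. y \<in> e}. int (w e))"
      have "int (\<Sum>e\<in>{e \<in> E. x \<in> e}. w e) = int (\<Sum>e\<in>{e \<in> E. y \<in> e}. w e)"
        using h by (simp only: of_nat_sum)
      then have "(\<Sum>e\<in>{e \<in> E. x \<in> e}. w e) = (\<Sum>e\<in>{e \<in> E. y \<in> e}. w e)"
        by (simp only: of_nat_eq_iff)
      then show "x = y" using winj xy by (meson inj_onD)
    qed
    have "int (max_mult V H) \<le> 2 * int s - 1"
      by (rule mult_bound[OF finV finE HE bd inj]) (use s1 in simp)
    then show ?thesis using HE by blast
  qed
  have part2: "\<exists>H \<subseteq> E. int (max_mult V H) \<le> 2 * int s - 3" if reg: "regular V E" and ne: "E \<noteq> {}"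
  proof -
    obtain r where r: "\<forall>v\<in>V. deg E v = r" using reg unfolding regular_def by blast
    obtain e0 where e0: "e0 \<in> E" using ne by blast
    obtain a b where ab: "a \<noteq> b" "a \<in> V" "b \<in> V" using sg e0 unfolding simple_graph_def by blast
    have s2: "s \<ge> 2"
    proof (rule ccontr)
      assume "\<not> s \<ge> 2"
      then have "s = 1" using s1 by simp
      then have w1: "\<forall>e\<in>E. w e = 1" using wr by auto
      have "(\<Sum>e\<in>{e \<in> E. v \<in> e}. w e) = r" if "v \<in> V" for v
      proof -
        have "(\<Sum>e\<in>{e \<in> E. v \<in> e}. w e) = (\<Sum>e\<in>{e \<in> E. v \<in> e}. 1)"
          by (rule sum.cong) (use w1 in auto)
        also have "\<dots> = deg E v" by (simp add: deg_def)
        finally show ?thesis using r that by simp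
      qed
      then have "a = b" using winj ab unfolding inj_on_def by metis
      then show False using ab by simp
    qed
    define c where "c e = int (w e) - 1" for e
    have cb: "\<forall>e\<in>E. 0 \<le> c e \<and> c e \<le> int s - 1" using wr by (auto simp: c_def)
    have tpos: "int s - 1 > 0" using s2 by simp
    obtain H where HE: "H \<subseteq> E" and bd: "\<forall>v\<in>V. \<bar>dl (int s - 1) c E H v\<bar> < int s - 1"
      using rounding[OF finV EV finE AB sides cb tpos] by auto
    have csum: "(\<Sum>e\<in>{e \<in> E. v \<in> e}. c e) = int (\<Sum>e\<in>{e \<in> E. v \<in> e}. w e) - int r"
      if "v \<in> V" for v
    proof -
      have "(\<Sum>e\<in>{e \<in> E. v \<in> e}. c e) = (\<Sum>e\<in>{e \<in> E. v \<in> e}. int (w e)) - (\<Sum>e\<in>{e \<in> E. v \<in> e}. 1)"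
        unfolding c_def by (simp add: sum_subtractf)
      also have "(\<Sum>e\<in>{e \<in> E. v \<in> e}. (1::int)) = int (deg E v)" by (simp add: deg_def)
      finally show ?thesis using r that by simp
    qed
    have inj: "inj_on (\<lambda>v. \<Sum>e\<in>{e \<in> E. v \<in> e}. c e) V"
    proof (rule inj_onI)
      fix u v assume uv: "u \<in> V" "v \<in> V" and h: "(\<Sum>e\<in>{e \<in> E. u \<in> e}. c e) = (\<Sum>e\<in>{e \<in> E. v \<in> e}. c e)"
      have "int (\<Sum>e\<in>{e \<in> E. u \<in> e}. w e) = int (\<Sum>e\<in>{e \<in> E. v \<in> e}. w e)"
        using csum[OF uv(1)] csum[OF uv(2)] h by linarith
      then have "(\<Sum>e\<in>{e \<in> E. u \<in> e}. w e) = (\<Sum>e\<in>{e \<in> E. v \<in> e}. w e)"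
        by (simp only: of_nat_eq_iff)
      then show "u = v" using winj uv unfolding inj_on_def by blast
    qed
    have "int (max_mult V H) \<le> 2 * (int s - 1) - 1"
      by (rule mult_bound[OF finV finE HE bd inj tpos])
    then show ?thesis using HE by (intro exI[of _ H]) simp
  qed
  show ?thesis using part1 part2 unfolding s_def by blast
qed

end
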